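(* Assume the setting below, with $\inf H>0$. Define $\tilde\tau:Y\to\mathbb Z^+$ by $\tilde\tau|_{Y_j}=\big[\|1_{Y_j}H\|_\theta\big]+1$ (integer part), where $\|1_{Y_j}H\|_\theta=\sup_{Y_j}|H|+\sup_{y\ne y'\in Y_j}|H(y)-H(y')|/d_\theta(y,y')$, and on $\Delta=\{(y,\ell)\in Y\times\mathbb Z:0\le\ell\le\tilde\tau(y)-1\}$ define $\tilde h(y,\ell)=H(y)/\tilde\tau(y)$. Then: (a) $H(y)=\sum_{\ell=0}^{\tilde\tau(y)-1}\tilde h(y,\ell)$ for all $y\in Y$; (b) $0<\inf\tilde h\le|\tilde h|_\infty\le1$ and $|\tilde h(y,\ell)-\tilde h(y',\ell)|\le d_\theta(y,y')$ for all $y,y'\in Y_j$, $j\ge1$, $0\le\ell\le\tilde\tau(y)-1$.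
   Context: Let $Y$ be a set with an at most countable partition $\{Y_j\}$ and a map $F:Y\to Y$; the separation time $s(y,y')$ is the least $n\ge0$ with $F^ny,F^ny'$ in distinct $Y_j$, and $d_\theta(y,y')=\theta^{s(y,y')}$ for a fixed $\theta\in(0,1)$. Let $H:Y\to(0,\infty)$ (the induced roof function of a nonuniformly expanding semiflow) satisfy: there is $C\ge1$ such that for all $j$, $\sup_{y\ne y'\in Y_j}|H(y)-H(y')|/d_\theta(y,y')\le C\inf_{Y_j}H$ (in particular $H$ is piecewise $d_\theta$-Lipschitz). *)

theory Defs
  imports Complex_Main
begin

text \<open>The partition {Y_j} of Y is encoded by an index map idx : Y -> nat,
  Y_j = {y. idx y = j}. Y is the ambient type 'a.\<close>

definition piece :: "('a \<Rightarrow> nat) \<Rightarrow> nat \<Rightarrow> 'a set" where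
  "piece idx j = {y. idx y = j}"

text \<open>Separation time: least n with F^n y, F^n y' in distinct pieces
  (None = infinity if they are never separated).\<close>
definition sep_time :: "('a \<Rightarrow> nat) \<Rightarrow> ('a \<Rightarrow> 'a) \<Rightarrow> 'a \<Rightarrow> 'a \<Rightarrow> nat option" where
  "sep_time idx F y y' =
     (if \<exists>n. idx ((F ^^ n) y) \<noteq> idx ((F ^^ n) y')
      then Some (LEAST n. idx ((F ^^ n) y) \<noteq> idx ((F ^^ n) y')) else None)"

definition d_theta :: "real \<Rightarrow> ('a \<Rightarrow> nat) \<Rightarrow> ('a \<Rightarrow> 'a) \<Rightarrow> 'a \<Rightarrow> 'a \<Rightarrow> real" where
  "d_theta \<theta> idx F y y' =
     (case sep_time idx F y y' of Some n \<Rightarrow> \<theta> ^ n | None \<Rightarrow> 0)"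

definition lip_piece :: "real \<Rightarrow> ('a \<Rightarrow> nat) \<Rightarrow> ('a \<Rightarrow> 'a) \<Rightarrow> ('a \<Rightarrow> real) \<Rightarrow> nat \<Rightarrow> real" where
  "lip_piece \<theta> idx F H j =
     Sup (insert 0 {\<bar>H y - H y'\<bar> / d_theta \<theta> idx F y y' | y y'.
                     y \<in> piece idx j \<and> y' \<in> piece idx j \<and> y \<noteq> y'})"

definition theta_norm_piece :: "real \<Rightarrow> ('a \<Rightarrow> nat) \<Rightarrow> ('a \<Rightarrow> 'a) \<Rightarrow> ('a \<Rightarrow> real) \<Rightarrow> nat \<Rightarrow> real" where
  "theta_norm_piece \<theta> idx F H j =
     Sup (insert 0 ((\<lambda>y. \<bar>H y\<bar>) ` piece idx j)) + lip_piece \<theta> idx F H j"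

definition tau_tilde :: "real \<Rightarrow> ('a \<Rightarrow> nat) \<Rightarrow> ('a \<Rightarrow> 'a) \<Rightarrow> ('a \<Rightarrow> real) \<Rightarrow> 'a \<Rightarrow> nat" where
  "tau_tilde \<theta> idx F H y = nat \<lfloor>theta_norm_piece \<theta> idx F H (idx y)\<rfloor> + 1"

definition h_tilde :: "real \<Rightarrow> ('a \<Rightarrow> nat) \<Rightarrow> ('a \<Rightarrow> 'a) \<Rightarrow> ('a \<Rightarrow> real) \<Rightarrow> 'a \<Rightarrow> nat \<Rightarrow> real" where
  "h_tilde \<theta> idx F H y l = H y / real (tau_tilde \<theta> idx F H y)"

definition Delta :: "real \<Rightarrow> ('a \<Rightarrow> nat) \<Rightarrow> ('a \<Rightarrow> 'a) \<Rightarrow> ('a \<Rightarrow> real) \<Rightarrow> ('a \<times> nat) set" where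
  "Delta \<theta> idx F H = {(y, l). l < tau_tilde \<theta> idx F H y}"

end

theory Submission
  imports Defs
begin

lemma d_bounds:
  assumes "0 < \<theta>" "\<theta> < 1"
  shows "0 \<le> d_theta \<theta> idx F y y' \<and> d_theta \<theta> idx F y y' \<le> 1"
  using assms unfolding d_theta_def
  by (auto split: option.split simp: power_le_one)

lemma piece_facts:
  fixes \<theta> :: real and idx :: "'a \<Rightarrow> nat" and F :: "'a \<Rightarrow> 'a" and H :: "'a \<Rightarrow> real"
  assumes theta: "0 < \<theta>" "\<theta> < 1"
    and Hpos: "\<And>y. 0 < H y"
    and C1: "C \<ge> 1"
    and HC: "\<forall>j. \<forall>y\<in>piece idx j. \<forall>y'\<in>piece idx j. y \<noteq> y' \<longrightarrow>
                 \<bar>H y - H y'\<bar> \<le> C * Inf (H ` piece idx j) * d_theta \<theta> idx F y y'"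
    and y: "y \<in> piece idx j"
  shows "H y \<le> theta_norm_piece \<theta> idx F H j
     \<and> theta_norm_piece \<theta> idx F H j \<le> (1 + 2*C) * H y
     \<and> (\<forall>y'\<in>piece idx j. \<bar>H y - H y'\<bar> \<le> lip_piece \<theta> idx F H j * d_theta \<theta> idx F y y')
     \<and> lip_piece \<theta> idx F H j \<le> theta_norm_piece \<theta> idx F H j"
proof -
  define m where "m = Inf (H ` piece idx j)"
  have ne: "piece idx j \<noteq> {}" using y by auto
  have bb: "bdd_below (H ` piece idx j)"
    by (rule bdd_belowI[of _ 0]) (use Hpos in \<open>auto simp: less_imp_le\<close>)
  have mle: "\<And>z. z \<in> piece idx j \<Longrightarrow> m \<le> H z"
    unfolding m_def using bb by (auto intro: cInf_lower)
  have m0: "0 \<le> m" unfolding m_def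
  proof (rule cInf_greatest)
    show "H ` piece idx j \<noteq> {}" using ne by simp
  next
    fix x assume "x \<in> H ` piece idx j"
    then show "0 \<le> x" using Hpos by (auto simp: less_imp_le)
  qed
  have diff: "\<bar>H z - H z'\<bar> \<le> C * m * d_theta \<theta> idx F z z'"
    if "z \<in> piece idx j" "z' \<in> piece idx j" for z z'
  proof (cases "z = z'")
    case True
    have "0 \<le> C * m * d_theta \<theta> idx F z z'"
      using m0 C1 d_bounds[OF theta, of idx F z z'] by simp
    then show ?thesis using True by simp
  next
    case False
    then show ?thesis using HC that unfolding m_def by blast
  qed
  have up: "H z \<le> (1 + C) * m" if z: "z \<in> piece idx j" for z
  proof -
    have "H z - C * m \<le> m" unfolding m_def
    proof (rule cInf_greatest)
      show "H ` piece idx j \<noteq> {}" using ne by auto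
    next
      fix x assume "x \<in> H ` piece idx j"
      then obtain z' where z': "z' \<in> piece idx j" "x = H z'" by auto
      have "\<bar>H z - H z'\<bar> \<le> C * m * d_theta \<theta> idx F z z'" using diff z z' by auto
      also have "\<dots> \<le> C * m" using d_bounds[OF theta, of idx F z z'] C1 m0
        by (simp add: mult_left_le)
      finally show "H z - C * Inf (H ` piece idx j) \<le> x" using z' m_def by auto
    qed
    thus ?thesis by (simp add: algebra_simps)
  qed
  define S where "S = insert 0 ((\<lambda>y. \<bar>H y\<bar>) ` piece idx j)"
  define L where "L = insert 0 {\<bar>H y - H y'\<bar> / d_theta \<theta> idx F y y' | y y'.
                     y \<in> piece idx j \<and> y' \<in> piece idx j \<and> y \<noteq> y'}"
  have Sb: "\<forall>x\<in>S. x \<le> (1 + C) * m"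
    unfolding S_def using up Hpos C1 m0 by (auto simp: less_imp_le)
  have Lb: "\<forall>x\<in>L. x \<le> C * m"
  proof
    fix x assume "x \<in> L"
    then consider "x = 0" | z z' where "z \<in> piece idx j" "z' \<in> piece idx j"
      "x = \<bar>H z - H z'\<bar> / d_theta \<theta> idx F z z'" unfolding L_def by auto
    then show "x \<le> C * m"
    proof cases
      case 1 then show ?thesis using C1 m0 by simp
    next
      case 2
      show ?thesis
      proof (cases "d_theta \<theta> idx F z z' = 0")
        case True then show ?thesis using 2 C1 m0 by simp
      next
        case False
        then have "d_theta \<theta> idx F z z' > 0" using d_bounds[OF theta, of idx F z z'] by auto
        then show ?thesis using 2 diff[OF 2(1,2)] by (simp add: divide_le_eq)
      qed
    qed
  qed
  have bS: "bdd_above S" using Sb by (auto intro: bdd_aboveI)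
  have bL: "bdd_above L" using Lb by (auto intro: bdd_aboveI)
  have supS: "Sup S \<le> (1 + C) * m" using Sb by (auto intro: cSup_least simp: S_def)
  have supL: "Sup L \<le> C * m" using Lb by (auto intro: cSup_least simp: L_def)
  have HS: "H y \<le> Sup S" using bS y Hpos unfolding S_def
    by (metis (no_types, lifting) abs_of_pos cSup_upper image_eqI insertCI)
  have S0: "0 \<le> Sup S" using bS unfolding S_def by (auto intro: cSup_upper)
  have L0: "0 \<le> Sup L" using bL unfolding L_def by (auto intro: cSup_upper)
  have lip: "lip_piece \<theta> idx F H j = Sup L" unfolding lip_piece_def L_def ..
  have nrm: "theta_norm_piece \<theta> idx F H j = Sup S + Sup L"
    unfolding theta_norm_piece_def lip S_def ..
  have lipd: "\<bar>H y - H y'\<bar> \<le> Sup L * d_theta \<theta> idx F y y'" if y': "y' \<in> piece idx j" for y'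
  proof (cases "y = y'")
    case True then show ?thesis using L0 d_bounds[OF theta, of idx F y y'] by simp
  next
    case False
    show ?thesis
    proof (cases "d_theta \<theta> idx F y y' = 0")
      case True then show ?thesis using diff[OF y y'] by simp
    next
      case F: False
      then have dp: "d_theta \<theta> idx F y y' > 0" using d_bounds[OF theta, of idx F y y'] by auto
      have "\<bar>H y - H y'\<bar> / d_theta \<theta> idx F y y' \<in> L" unfolding L_def using y y' False by blast
      then have "\<bar>H y - H y'\<bar> / d_theta \<theta> idx F y y' \<le> Sup L" using bL by (rule cSup_upper)
      then show ?thesis using dp by (simp add: divide_le_eq)
    qed
  qed
  have "(1 + C) * m + C * m \<le> (1 + 2 * C) * H y"
  proof -
    have "(1 + 2*C) * m \<le> (1 + 2*C) * H y" using mle[OF y] C1 by (intro mult_left_mono) auto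
    then show ?thesis by (simp add: algebra_simps)
  qed
  then show ?thesis using nrm lip HS L0 S0 supS supL lipd by auto
qed

theorem lemma3p1:
  fixes \<theta> :: real and idx :: "'a \<Rightarrow> nat" and F :: "'a \<Rightarrow> 'a" and H :: "'a \<Rightarrow> real"
  assumes theta: "0 < \<theta>" "\<theta> < 1"
    and Hpos: "\<And>y. 0 < H y"
    and Hreg: "\<exists>C\<ge>1. \<forall>j. \<forall>y\<in>piece idx j. \<forall>y'\<in>piece idx j. y \<noteq> y' \<longrightarrow>
                 \<bar>H y - H y'\<bar> \<le> C * Inf (H ` piece idx j) * d_theta \<theta> idx F y y'"
    and infH: "0 < Inf (range H)"
  shows "(\<forall>y. H y = (\<Sum>l<tau_tilde \<theta> idx F H y. h_tilde \<theta> idx F H y l))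
    \<and> 0 < Inf ((\<lambda>(y, l). h_tilde \<theta> idx F H y l) ` Delta \<theta> idx F H)
    \<and> Inf ((\<lambda>(y, l). h_tilde \<theta> idx F H y l) ` Delta \<theta> idx F H)
        \<le> Sup ((\<lambda>(y, l). \<bar>h_tilde \<theta> idx F H y l\<bar>) ` Delta \<theta> idx F H)
    \<and> Sup ((\<lambda>(y, l). \<bar>h_tilde \<theta> idx F H y l\<bar>) ` Delta \<theta> idx F H) \<le> 1
    \<and> (\<forall>j. \<forall>y\<in>piece idx j. \<forall>y'\<in>piece idx j. \<forall>l. l < tau_tilde \<theta> idx F H y \<longrightarrow>
         \<bar>h_tilde \<theta> idx F H y l - h_tilde \<theta> idx F H y' l\<bar> \<le> d_theta \<theta> idx F y y')"
proof -
  obtain C where C1: "C \<ge> 1" and HC: "\<forall>j. \<forall>y\<in>piece idx j. \<forall>y'\<in>piece idx j. y \<noteq> y' \<longrightarrow>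
                 \<bar>H y - H y'\<bar> \<le> C * Inf (H ` piece idx j) * d_theta \<theta> idx F y y'"
    using Hreg by blast
  let ?N = "\<lambda>y. theta_norm_piece \<theta> idx F H (idx y)"
  let ?t = "\<lambda>y. tau_tilde \<theta> idx F H y"
  let ?h = "\<lambda>y. h_tilde \<theta> idx F H y 0"
  define m where "m = Inf (range H)"
  have PF: "\<And>y. H y \<le> ?N y \<and> ?N y \<le> (1 + 2*C) * H y
     \<and> (\<forall>y'\<in>piece idx (idx y). \<bar>H y - H y'\<bar> \<le> lip_piece \<theta> idx F H (idx y) * d_theta \<theta> idx F y y')
     \<and> lip_piece \<theta> idx F H (idx y) \<le> ?N y"
    by (rule piece_facts[OF theta Hpos C1 HC]) (simp add: piece_def)
  have tgt: "real (?t y) > ?N y" for y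
    unfolding tau_tilde_def by linarith
  have tle: "real (?t y) \<le> ?N y + 1" for y
    using PF[of y] Hpos[of y] unfolding tau_tilde_def by linarith
  have hdef: "h_tilde \<theta> idx F H y l = H y / real (?t y)" for y l
    unfolding h_tilde_def ..
  have tpos: "real (?t y) > 0" for y unfolding tau_tilde_def by simp
  have hpos: "h_tilde \<theta> idx F H y l > 0" for y l using Hpos[of y] tpos[of y] hdef by simp
  have hle1: "h_tilde \<theta> idx F H y l \<le> 1" for y l
    using PF[of y] tgt[of y] tpos[of y] by (simp add: hdef divide_le_eq)
  have mle: "m \<le> H y" for y unfolding m_def
    by (rule cInf_lower) (auto intro!: bdd_belowI[of _ 0] simp: less_imp_le Hpos)
  have m0: "0 < m" using infH m_def by simp
  define b where "b = m / ((1 + 2*C) * m + 1)"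
  have b0: "b > 0" unfolding b_def using m0 C1 by (simp add: add_pos_nonneg)
  have hb: "b \<le> h_tilde \<theta> idx F H y l" for y l
  proof -
    have "real (?t y) \<le> (1 + 2*C) * H y + 1" using tle[of y] PF[of y] by linarith
    then have "H y / ((1 + 2*C) * H y + 1) \<le> H y / real (?t y)"
      using Hpos[of y] tpos[of y] by (intro divide_left_mono) auto
    moreover have "m / ((1 + 2*C) * m + 1) \<le> H y / ((1 + 2*C) * H y + 1)"
    proof -
      have p1: "(1 + 2*C) * m + 1 > 0" and p2: "(1 + 2*C) * H y + 1 > 0"
        using m0 C1 Hpos[of y] by (simp_all add: add_pos_nonneg)
      have "m * ((1 + 2*C) * H y + 1) \<le> H y * ((1 + 2*C) * m + 1)"
        using mle[of y] by (simp add: algebra_simps)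
      then show ?thesis using p1 p2 by (simp add: divide_le_eq le_divide_eq mult.commute)
    qed
    ultimately show ?thesis unfolding b_def hdef by linarith
  qed
  have D0: "(y, 0) \<in> Delta \<theta> idx F H" for y unfolding Delta_def tau_tilde_def by simp
  let ?A = "(\<lambda>(y, l). h_tilde \<theta> idx F H y l) ` Delta \<theta> idx F H"
  let ?B = "(\<lambda>(y, l). \<bar>h_tilde \<theta> idx F H y l\<bar>) ` Delta \<theta> idx F H"
  have Ane: "?A \<noteq> {}" and Bne: "?B \<noteq> {}" using D0 by blast+
  have A1: "0 < Inf ?A"
  proof -
    have "b \<le> Inf ?A" using Ane hb by (auto intro!: cInf_greatest)
    then show ?thesis using b0 by linarith
  qed
  have bA: "bdd_below ?A" using hb by (auto intro!: bdd_belowI[of _ b])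
  have bB: "bdd_above ?B" using hle1 hpos by (auto intro!: bdd_aboveI[of _ 1] simp: less_imp_le)
  have "Inf ?A \<le> ?h undefined" using bA D0 by (force intro: cInf_lower)
  also have "\<dots> \<le> Sup ?B"
  proof -
    have "\<bar>?h undefined\<bar> \<in> ?B" using D0 by force
    then have "\<bar>?h undefined\<bar> \<le> Sup ?B" using bB by (rule cSup_upper)
    then show ?thesis by linarith
  qed
  finally have A2: "Inf ?A \<le> Sup ?B" .
  have A3: "Sup ?B \<le> 1" using Bne hle1 hpos by (auto intro!: cSup_least simp: less_imp_le)
  have A0: "\<forall>y. H y = (\<Sum>l<?t y. h_tilde \<theta> idx F H y l)"
    using tpos by (simp add: hdef)
  have A4: "\<forall>j. \<forall>y\<in>piece idx j. \<forall>y'\<in>piece idx j. \<forall>l. l < ?t y \<longrightarrow>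
         \<bar>h_tilde \<theta> idx F H y l - h_tilde \<theta> idx F H y' l\<bar> \<le> d_theta \<theta> idx F y y'"
  proof (intro allI ballI impI)
    fix j y y' l assume y: "y \<in> piece idx j" and y': "y' \<in> piece idx j"
    have jj: "idx y = j" "idx y' = j" using y y' by (auto simp: piece_def)
    have teq: "?t y' = ?t y" unfolding tau_tilde_def using jj by simp
    have "\<bar>H y - H y'\<bar> \<le> lip_piece \<theta> idx F H (idx y) * d_theta \<theta> idx F y y'"
      using PF[of y] y' jj by auto
    also have "\<dots> \<le> real (?t y) * d_theta \<theta> idx F y y'"
      using PF[of y] tgt[of y] d_bounds[OF theta, of idx F y y']
      by (intro mult_right_mono) auto
    finally have "\<bar>H y - H y'\<bar> / real (?t y) \<le> d_theta \<theta> idx F y y'"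
      using tpos[of y] by (simp add: divide_le_eq mult.commute)
    then show "\<bar>h_tilde \<theta> idx F H y l - h_tilde \<theta> idx F H y' l\<bar> \<le> d_theta \<theta> idx F y y'"
      unfolding hdef teq using tpos[of y] by (simp add: diff_divide_distrib[symmetric])
  qed
  show ?thesis using A0 A1 A2 A3 A4 by blast
qed

end
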